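(* Let $\mu\in A_1$, $0<\beta<1$ and $b\in Lip_{\beta,\mu}$. Then for any $1<r<\infty$ there is a constant $C>0$ such that for any locally integrable function $f$, $$M_b(f)(x)\le C\|b\|_{Lip_{\beta,\mu}}\,\mu(x)\,M_{\beta,\mu,r}(f)(x)\quad\text{for a.e. }x\in\mathbb{R}^n.$$
   Context: Cubes have sides parallel to the axes; $f_Q=|Q|^{-1}\int_Q f$; for a weight $\mu$, $\mu(Q)=\int_Q\mu$. $\mu\in A_1$ means there is $C>0$ such that for every cube $Q$, $\frac{1}{|Q|}\int_Q\mu(y)\,dy\le C\mu(x)$ for a.e. $x\in Q$. $Lip_{\beta,\mu}$ is the space of locally integrable $f$ with $\|f\|_{Lip_{\beta,\mu}}=\sup_Q \frac{1}{\mu(Q)^{1+\beta/n}}\int_Q|f(x)-f_Q|\,dx<\infty$. $M_b(f)(x)=\sup_{Q\ni x}\frac{1}{|Q|}\int_Q|b(x)-b(y)||f(y)|\,dy$, and the weighted fractional maximal function is $M_{\beta,\mu,r}(f)(x)=\sup_{Q\ni x}\big(\frac{1}{\mu(Q)^{1-r\beta/n}}\int_Q|f(y)|^r\mu(y)\,dy\big)^{1/r}$, suprema over cubes containing $x$. *)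

theory Defs
  imports "HOL-Analysis.Analysis"
begin

definition cubes :: "'a::euclidean_space set set" where
  "cubes = {cbox a (a + h *\<^sub>R One) | a h. h > 0}"

definition locally_integrable :: "('a::euclidean_space \<Rightarrow> real) \<Rightarrow> bool" where
  "locally_integrable f \<longleftrightarrow> (\<forall>K. compact K \<longrightarrow> set_integrable lebesgue K f)"

definition weight :: "('a::euclidean_space \<Rightarrow> real) \<Rightarrow> bool" where
  "weight \<mu> \<longleftrightarrow> (\<forall>x. 0 \<le> \<mu> x) \<and> locally_integrable \<mu> \<and> (AE x in lebesgue. 0 < \<mu> x)"

definition wmeas :: "('a::euclidean_space \<Rightarrow> real) \<Rightarrow> 'a set \<Rightarrow> real" where
  "wmeas \<mu> Q = (LINT y:Q|lebesgue. \<mu> y)"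

definition cube_avg :: "('a::euclidean_space \<Rightarrow> real) \<Rightarrow> 'a set \<Rightarrow> real" where
  "cube_avg f Q = (LINT y:Q|lebesgue. f y) / measure lebesgue Q"

definition A1 :: "('a::euclidean_space \<Rightarrow> real) \<Rightarrow> bool" where
  "A1 \<mu> \<longleftrightarrow> (\<exists>C>0. \<forall>Q\<in>cubes.
      AE x in lebesgue. x \<in> Q \<longrightarrow> cube_avg \<mu> Q \<le> C * \<mu> x)"

definition lip_norm :: "real \<Rightarrow> ('a::euclidean_space \<Rightarrow> real) \<Rightarrow> ('a \<Rightarrow> real) \<Rightarrow> ennreal" where
  "lip_norm \<beta> \<mu> f = (SUP Q\<in>cubes.
      ennreal (1 / wmeas \<mu> Q powr (1 + \<beta> / real DIM('a))) *
      (\<integral>\<^sup>+ x\<in>Q. ennreal \<bar>f x - cube_avg f Q\<bar> \<partial>lebesgue))"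

definition in_Lip :: "real \<Rightarrow> ('a::euclidean_space \<Rightarrow> real) \<Rightarrow> ('a \<Rightarrow> real) \<Rightarrow> bool" where
  "in_Lip \<beta> \<mu> f \<longleftrightarrow> locally_integrable f \<and> lip_norm \<beta> \<mu> f < \<infinity>"

definition Mb :: "('a::euclidean_space \<Rightarrow> real) \<Rightarrow> ('a \<Rightarrow> real) \<Rightarrow> 'a \<Rightarrow> ennreal" where
  "Mb b f x = (SUP Q\<in>{Q\<in>cubes. x \<in> Q}.
      ennreal (1 / measure lebesgue Q) *
      (\<integral>\<^sup>+ y\<in>Q. ennreal (\<bar>b x - b y\<bar> * \<bar>f y\<bar>) \<partial>lebesgue))"

definition Mfrac :: "real \<Rightarrow> ('a::euclidean_space \<Rightarrow> real) \<Rightarrow> real \<Rightarrow> ('a \<Rightarrow> real) \<Rightarrow> 'a \<Rightarrow> ennreal" where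
  "Mfrac \<beta> \<mu> r f x = (SUP Q\<in>{Q\<in>cubes. x \<in> Q}.
      (let I = (\<integral>\<^sup>+ y\<in>Q. ennreal (\<bar>f y\<bar> powr r * \<mu> y) \<partial>lebesgue) in
       if I = \<infinity> then \<infinity>
       else ennreal ((enn2real I / wmeas \<mu> Q powr (1 - r * \<beta> / real DIM('a))) powr (1 / r))))"

end

theory Submission
  imports Defs
begin
lemma li_meas:
  assumes "locally_integrable f"
  shows "f \<in> borel_measurable lebesgue"
proof -
  have m: "(\<lambda>x. indicator (cball 0 (real k)) x *\<^sub>R f x) \<in> borel_measurable lebesgue" for k :: nat
    using assms unfolding locally_integrable_def set_integrable_def
    by (meson borel_measurable_integrable compact_cball)
  have "(\<lambda>k. indicator (cball 0 (real k)) x *\<^sub>R f x) \<longlonglongrightarrow> f x" for x :: 'a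
  proof (rule tendsto_eventually)
    obtain k :: nat where "norm x \<le> real k" using real_arch_simple by blast
    then show "\<forall>\<^sub>F k in sequentially. indicator (cball 0 (real k)) x *\<^sub>R f x = f x"
      unfolding eventually_sequentially
      by (intro exI[of _ k]) (auto simp: indicator_def dist_norm)
  qed
  then show ?thesis
    by (rule borel_measurable_LIMSEQ_real[OF _ m])
qed

lemma li_set_integrable:
  assumes "locally_integrable f" "bounded S" "S \<in> sets lebesgue"
  shows "set_integrable lebesgue S f"
proof -
  have "set_integrable lebesgue (closure S) f"
    using assms unfolding locally_integrable_def by (simp add: compact_closure)
  then show ?thesis
    by (rule set_integrable_subset) (use assms closure_subset in auto)
qed

definition cube :: "'a::euclidean_space \<Rightarrow> real \<Rightarrow> 'a set" where
  "cube a h = cbox a (a + h *\<^sub>R One)"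

lemma cubes_iff: "Q \<in> cubes \<longleftrightarrow> (\<exists>a h. h > 0 \<and> Q = cube a h)"
  by (auto simp: cubes_def cube_def)

lemma mem_cube: "x \<in> cube a h \<longleftrightarrow> (\<forall>i\<in>Basis. a \<bullet> i \<le> x \<bullet> i \<and> x \<bullet> i \<le> a \<bullet> i + h)"
  by (auto simp: cube_def mem_box inner_add_left)

lemma cube_subset:
  assumes "\<forall>i\<in>Basis. a' \<bullet> i \<le> a \<bullet> i \<and> a \<bullet> i + h \<le> a' \<bullet> i + h'"
  shows "cube a h \<subseteq> cube a' h'"
  using assms unfolding mem_cube subset_iff by force

lemma measure_cube:
  fixes a :: "'a::euclidean_space"
  assumes "h \<ge> 0"
  shows "measure lebesgue (cube a h) = h ^ DIM('a::euclidean_space)"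
proof -
  have "measure lebesgue (cube a h) = measure lborel (cbox a (a + h *\<^sub>R One))"
    unfolding cube_def by (simp add: measure_completion)
  also have "\<dots> = (\<Prod>i\<in>(Basis::'a set). h)"
    using assms by (subst content_cbox) (auto simp: inner_add_left)
  finally show ?thesis by simp
qed

lemma cube_sets [measurable]: "cube a h \<in> sets lebesgue"
  unfolding cube_def by simp

lemma cube_bounded: "bounded (cube a h)"
  unfolding cube_def by simp

lemma cube_compact: "compact (cube a h)"
  unfolding cube_def by simp

lemma cube_lmeasurable: "cube a h \<in> lmeasurable"
  unfolding cube_def by (simp add: lmeasurable_cbox)

lemma cube_emeasure:
  fixes a :: "'a::euclidean_space"
  assumes "h \<ge> 0"
  shows "emeasure lebesgue (cube a h) = ennreal (h ^ DIM('a::euclidean_space))"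
  using cube_lmeasurable[of a h] measure_cube[OF assms, of a]
  by (metis emeasure_eq_measure2 fmeasurableD2 infinity_ennreal_def)

lemma wmeas_mono:
  assumes "locally_integrable \<mu>" "\<And>x. 0 \<le> \<mu> x" "S \<subseteq> T" "bounded T" "S \<in> sets lebesgue" "T \<in> sets lebesgue"
  shows "wmeas \<mu> S \<le> wmeas \<mu> T"
proof -
  have "set_integrable lebesgue S \<mu>" "set_integrable lebesgue T \<mu>"
    using assms by (auto intro!: li_set_integrable bounded_subset[of T S])
  then show ?thesis unfolding wmeas_def set_lebesgue_integral_def set_integrable_def
    by (intro integral_mono) (use assms in \<open>auto simp: indicator_def\<close>)
qed

lemma A1_uniform:
  fixes \<mu> :: "'a::euclidean_space \<Rightarrow> real"
  assumes "weight \<mu>" "A1 \<mu>"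
  shows "\<exists>C1\<ge>1. AE x in lebesgue. 0 < \<mu> x \<and>
     (\<forall>Q\<in>cubes. x \<in> Q \<longrightarrow> wmeas \<mu> Q / measure lebesgue Q \<le> C1 * \<mu> x)"
proof -
  let ?n = "DIM('a)"
  obtain C where C: "C > 0" and CQ: "\<And>Q. Q \<in> cubes \<Longrightarrow> AE x in lebesgue. x \<in> Q \<longrightarrow> cube_avg \<mu> Q \<le> C * \<mu> x"
    using assms(2) unfolding A1_def by blast
  have mu0: "\<And>x. 0 \<le> \<mu> x" and muli: "locally_integrable \<mu>" and mupos: "AE x in lebesgue. 0 < \<mu> x"
    using assms(1) unfolding weight_def by auto
  obtain D :: "'a set" where D: "countable D" "\<And>U. open U \<Longrightarrow> U \<noteq> {} \<Longrightarrow> \<exists>y \<in> D. y \<in> U"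
    using countable_dense_exists by blast
  define F where "F = (\<lambda>(d, h). cube d h) ` (D \<times> (\<rat> \<inter> {0<..}))"
  have "countable F" unfolding F_def using D(1) countable_rat by blast
  have Fc: "F \<subseteq> cubes" unfolding F_def by (force simp: cubes_iff)
  have "AE x in lebesgue. \<forall>Q\<in>F. x \<in> Q \<longrightarrow> cube_avg \<mu> Q \<le> C * \<mu> x"
    using \<open>countable F\<close> Fc CQ by (intro AE_ball_countable') auto
  then have "AE x in lebesgue. 0 < \<mu> x \<and> (\<forall>Q\<in>cubes. x \<in> Q \<longrightarrow> wmeas \<mu> Q / measure lebesgue Q \<le> (2^?n * C) * \<mu> x)"
    using mupos
  proof eventually_elim
    case (elim x)
    show ?case
    proof (intro conjI ballI impI)
      show "0 < \<mu> x" using elim by auto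
      fix Q assume "Q \<in> cubes" "x \<in> Q"
      then obtain a h where h: "h > 0" and Q: "Q = cube a h" unfolding cubes_iff by blast
      have "box (a - (h/2) *\<^sub>R One) a \<noteq> {}" using h by (simp add: box_ne_empty inner_diff_left)
      then obtain d where d: "d \<in> D" "d \<in> box (a - (h/2) *\<^sub>R One) a" using D(2)[of "box (a - (h/2) *\<^sub>R One) a"] by auto
      obtain h' where h': "h' \<in> \<rat>" "3*h/2 < h'" "h' < 2*h" using Rats_dense_in_real[of "3*h/2" "2*h"] h by auto
      have QF: "cube d h' \<in> F" unfolding F_def using d h' h by auto
      have sub: "Q \<subseteq> cube d h'" unfolding Q
        by (rule cube_subset) (use d h' in \<open>auto simp: mem_box inner_diff_left\<close>)
      have "cube_avg \<mu> (cube d h') \<le> C * \<mu> x" using elim QF sub \<open>x \<in> Q\<close> by auto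
      then have "wmeas \<mu> (cube d h') / h' ^ ?n \<le> C * \<mu> x"
        using h' h by (simp add: cube_avg_def wmeas_def measure_cube)
      then have 1: "wmeas \<mu> (cube d h') \<le> C * \<mu> x * h' ^ ?n"
        using h' h by (simp add: divide_le_eq)
      have "h' ^ ?n \<le> (2*h) ^ ?n" using h' h by (intro power_mono) auto
      then have 2: "C * \<mu> x * h' ^ ?n \<le> C * \<mu> x * (2*h)^?n"
        using C mu0[of x] by (intro mult_left_mono) auto
      have 3: "wmeas \<mu> Q \<le> wmeas \<mu> (cube d h')"
        using sub by (intro wmeas_mono[OF muli mu0]) (auto simp: cube_bounded Q)
      have 4: "C * \<mu> x * (2*h)^?n = (2^?n * C * \<mu> x) * h^?n" by (simp add: power_mult_distrib)
      have "wmeas \<mu> Q \<le> (2^?n * C * \<mu> x) * h ^ ?n"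
        using 1 2 3 4 by linarith
      then show "wmeas \<mu> Q / measure lebesgue Q \<le> (2^?n * C) * \<mu> x"
        using h by (simp add: Q measure_cube divide_le_eq)
    qed
  qed
  then have "AE x in lebesgue. 0 < \<mu> x \<and> (\<forall>Q\<in>cubes. x \<in> Q \<longrightarrow> wmeas \<mu> Q / measure lebesgue Q \<le> max 1 (2^?n * C) * \<mu> x)"
  proof eventually_elim
    case (elim x)
    have "2^?n * C * \<mu> x \<le> max 1 (2^?n * C) * \<mu> x"
      using elim by (intro mult_right_mono) auto
    then show ?case using elim by (meson order_trans)
  qed
  then show ?thesis by (intro exI[of _ "max 1 (2^?n * C)"]) auto
qed

lemma set_nn_eq_set_integral:
  assumes "set_integrable M A f" "A \<in> sets M" "AE x in M. x \<in> A \<longrightarrow> 0 \<le> f x"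
  shows "(\<integral>\<^sup>+x\<in>A. ennreal (f x) \<partial>M) = ennreal (LINT x:A|M. f x)"
proof -
  have AE: "AE x in M. 0 \<le> f x * indicator A x"
    using assms(3) by eventually_elim (auto simp: indicator_def)
  show ?thesis
    unfolding set_lebesgue_integral_def nn_integral_set_ennreal using assms AE
    by (subst nn_integral_eq_integral) (simp_all add: mult_ac set_integrable_def)
qed

lemma li_const: "locally_integrable (\<lambda>_. c)"
  unfolding locally_integrable_def set_integrable_def
proof (intro allI impI)
  fix K :: "'a::euclidean_space set" assume "compact K"
  then have "K \<in> lmeasurable" by (rule lmeasurable_compact)
  then show "integrable lebesgue (\<lambda>x. indicat_real K x *\<^sub>R c)"
    by (intro integrable_indicator) (auto simp: fmeasurable_def)
qed

locale setting =
  fixes \<mu> b :: "'a::euclidean_space \<Rightarrow> real" and \<beta> C1 :: real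
  assumes weight: "weight \<mu>" and beta: "0 < \<beta>" "\<beta> < 1" and lip: "in_Lip \<beta> \<mu> b"
    and C1: "C1 \<ge> 1"
    and GA: "AE x in lebesgue. 0 < \<mu> x \<and> (\<forall>Q\<in>cubes. x \<in> Q \<longrightarrow> wmeas \<mu> Q / measure lebesgue Q \<le> C1 * \<mu> x)"
begin

abbreviation "L \<equiv> enn2real (lip_norm \<beta> \<mu> b)"

lemma mu0: "0 \<le> \<mu> x" and muli: "locally_integrable \<mu>" and mupos: "AE x in lebesgue. 0 < \<mu> x"
  and bli: "locally_integrable b"
  using weight lip unfolding weight_def in_Lip_def by auto

lemma mu_meas[measurable]: "\<mu> \<in> borel_measurable lebesgue" and b_meas[measurable]: "b \<in> borel_measurable lebesgue"
  using li_meas muli bli by auto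

lemma L_nonneg: "0 \<le> L" by simp

lemma lip_eq: "lip_norm \<beta> \<mu> b = ennreal L"
  using lip unfolding in_Lip_def by (simp add: ennreal_enn2real_if less_top)

lemma cube_int_mu: "Q \<in> cubes \<Longrightarrow> set_integrable lebesgue Q \<mu>"
  by (auto simp: cubes_iff cube_bounded intro!: li_set_integrable muli)

lemma cube_int_b: "Q \<in> cubes \<Longrightarrow> set_integrable lebesgue Q b"
  by (auto simp: cubes_iff cube_bounded intro!: li_set_integrable bli)

lemma cube_sets': "Q \<in> cubes \<Longrightarrow> Q \<in> sets lebesgue"
  by (auto simp: cubes_iff)

lemma cube_meas_pos: "Q \<in> cubes \<Longrightarrow> 0 < measure lebesgue Q"
  by (auto simp: cubes_iff measure_cube)

lemma wmeas_pos:
  assumes Q: "Q \<in> cubes"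
  shows "0 < wmeas \<mu> Q"
proof (rule ccontr)
  assume "\<not> 0 < wmeas \<mu> Q"
  moreover have "0 \<le> wmeas \<mu> Q" unfolding wmeas_def set_lebesgue_integral_def
    by (rule Bochner_Integration.integral_nonneg) (auto simp: mu0 indicator_def)
  ultimately have "wmeas \<mu> Q = 0" by simp
  then have "(\<integral>\<^sup>+x\<in>Q. ennreal (\<mu> x) \<partial>lebesgue) = 0"
    using Q by (subst set_nn_eq_set_integral) (auto simp: cube_int_mu cube_sets' mu0 wmeas_def)
  moreover have Qs[measurable]: "Q \<in> sets lebesgue" using Q by (rule cube_sets')
  have "(\<lambda>x. ennreal (\<mu> x) * indicator Q x) \<in> borel_measurable lebesgue" by measurable
  ultimately have "AE x in lebesgue. ennreal (\<mu> x) * indicator Q x = 0"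
    by (subst (asm) nn_integral_0_iff_AE) auto
  then have "AE x in lebesgue. x \<notin> Q"
    using mupos by eventually_elim (auto simp: indicator_def)
  then have "Q \<in> null_sets lebesgue"
    using Q by (subst AE_iff_null_sets) (auto simp: cube_sets')
  then have "measure lebesgue Q = 0" by (rule measure_eq_0_null_sets)
  with cube_meas_pos[OF Q] show False by simp
qed

lemma wmeas_finite_nn:
  assumes Q: "Q \<in> cubes"
  shows "(\<integral>\<^sup>+x\<in>Q. ennreal (\<mu> x) \<partial>lebesgue) = ennreal (wmeas \<mu> Q)"
  using Q by (subst set_nn_eq_set_integral) (auto simp: cube_int_mu cube_sets' mu0 wmeas_def)

lemma osc_integrable:
  assumes Q: "Q \<in> cubes" and S: "S \<in> sets lebesgue" "S \<subseteq> Q"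
  shows "set_integrable lebesgue S (\<lambda>y. \<bar>b y - c\<bar>)"
proof -
  obtain a h where "Q = cube a h" using Q by (auto simp: cubes_iff)
  then have "bounded S" using S(2) by (metis bounded_subset cube_bounded)
  then have "set_integrable lebesgue S b" "set_integrable lebesgue S (\<lambda>_. c)"
    using S by (auto intro!: li_set_integrable bli li_const)
  then show ?thesis
    by (intro set_integrable_abs set_integral_diff)
qed

lemma lip_bound:
  assumes Q: "Q \<in> cubes"
  shows "(LINT y:Q|lebesgue. \<bar>b y - cube_avg b Q\<bar>) \<le> L * wmeas \<mu> Q powr (1 + \<beta> / real DIM('a))"
proof -
  let ?w = "wmeas \<mu> Q" and ?p = "1 + \<beta> / real DIM('a)"
  let ?I = "LINT y:Q|lebesgue. \<bar>b y - cube_avg b Q\<bar>"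
  have w: "0 < ?w" using wmeas_pos[OF Q] .
  have wp: "0 < ?w powr ?p" using w by simp
  have I0: "0 \<le> ?I" unfolding set_lebesgue_integral_def
    by (rule Bochner_Integration.integral_nonneg) (auto simp: indicator_def)
  have I: "(\<integral>\<^sup>+y\<in>Q. ennreal \<bar>b y - cube_avg b Q\<bar> \<partial>lebesgue) = ennreal ?I"
    by (rule set_nn_eq_set_integral[OF osc_integrable[OF Q cube_sets'[OF Q] order_refl] cube_sets'[OF Q]]) simp
  have "ennreal (1 / ?w powr ?p) * (\<integral>\<^sup>+y\<in>Q. ennreal \<bar>b y - cube_avg b Q\<bar> \<partial>lebesgue) \<le> lip_norm \<beta> \<mu> b"
  proof -
    have e: "lip_norm \<beta> \<mu> b = (SUP Q\<in>cubes. ennreal (1 / wmeas \<mu> Q powr ?p) *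
      (\<integral>\<^sup>+ x\<in>Q. ennreal \<bar>b x - cube_avg b Q\<bar> \<partial>lebesgue))"
      by (rule lip_norm_def)
    show ?thesis
      apply (rule order_trans[OF _ eq_refl[OF e[symmetric]]])
      apply (rule SUP_upper[OF Q])
      done
  qed
  then have "ennreal (1 / ?w powr ?p) * ennreal ?I \<le> ennreal L"
    unfolding I by (subst (asm) lip_eq)
  moreover have "ennreal (1 / ?w powr ?p) * ennreal ?I = ennreal (1 / ?w powr ?p * ?I)"
    using wp I0 by (intro ennreal_mult''[symmetric]) simp
  ultimately have "ennreal (1 / ?w powr ?p * ?I) \<le> ennreal L" by simp
  then have 1: "1 / ?w powr ?p * ?I \<le> L"
    by (subst (asm) ennreal_le_iff) auto
  have "?I = (1 / ?w powr ?p * ?I) * ?w powr ?p" using wp by simp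
  also have "\<dots> \<le> L * ?w powr ?p" using 1 wp by (intro mult_right_mono) auto
  finally show ?thesis .
qed

end

lemma set_integral_mono_set:
  fixes f :: "_ \<Rightarrow> real"
  assumes "set_integrable M B f" "A \<subseteq> B" "A \<in> sets M" "\<And>x. x \<in> B \<Longrightarrow> 0 \<le> f x"
  shows "(LINT x:A|M. f x) \<le> (LINT x:B|M. f x)"
proof -
  have "set_integrable M A f" by (rule set_integrable_subset[OF assms(1) assms(3) assms(2)])
  then show ?thesis unfolding set_lebesgue_integral_def
  proof (intro integral_mono)
    show "integrable M (\<lambda>x. indicat_real A x *\<^sub>R f x)"
      using \<open>set_integrable M A f\<close> by (simp only: set_integrable_def)
    show "integrable M (\<lambda>x. indicat_real B x *\<^sub>R f x)"
      using assms(1) by (simp only: set_integrable_def)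
    fix x show "indicat_real A x *\<^sub>R f x \<le> indicat_real B x *\<^sub>R f x"
      using assms(2) assms(4)[of x] by (cases "x \<in> A"; cases "x \<in> B") auto
  qed
qed

lemma child_exists:
  fixes a x :: "'a::euclidean_space"
  assumes "x \<in> cube a h" "h > 0"
  shows "\<exists>a'. x \<in> cube a' (h/2) \<and> cube a' (h/2) \<subseteq> cube a h"
proof -
  define a' where "a' = a + (h/2) *\<^sub>R (\<Sum>i\<in>Basis. (if a \<bullet> i + h/2 \<le> x \<bullet> i then 1 else 0) *\<^sub>R i)"
  have ai: "a' \<bullet> i = a \<bullet> i + (if a \<bullet> i + h/2 \<le> x \<bullet> i then h/2 else 0)" if "i \<in> Basis" for i
    using that by (simp add: a'_def inner_add_left inner_sum_left_Basis)
  have "x \<in> cube a' (h/2)" using assms unfolding mem_cube by (auto simp: ai)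
  moreover have "cube a' (h/2) \<subseteq> cube a h"
    by (rule cube_subset) (use assms in \<open>auto simp: ai\<close>)
  ultimately show ?thesis by blast
qed

context setting
begin

definition good :: "'a \<Rightarrow> bool" where
  "good x \<longleftrightarrow> 0 < \<mu> x \<and> (\<forall>Q\<in>cubes. x \<in> Q \<longrightarrow> wmeas \<mu> Q / measure lebesgue Q \<le> C1 * \<mu> x)"

lemma AE_good: "AE x in lebesgue. good x"
  using GA unfolding good_def .

lemma good_bound:
  assumes "good x" "Q \<in> cubes" "x \<in> Q"
  shows "wmeas \<mu> Q \<le> C1 * \<mu> x * measure lebesgue Q"
  using assms cube_meas_pos[OF assms(2)] unfolding good_def by (auto simp: divide_le_eq)

lemma avg_diff:
  assumes R: "R \<in> cubes" and R': "R' \<in> cubes" "R' \<subseteq> R"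
  shows "\<bar>cube_avg b R' - cube_avg b R\<bar> \<le> (LINT y:R|lebesgue. \<bar>b y - cube_avg b R\<bar>) / measure lebesgue R'"
proof -
  let ?c = "cube_avg b R" and ?m = "measure lebesgue R'"
  have m: "0 < ?m" using cube_meas_pos[OF R'(1)] .
  have Rs: "R' \<in> sets lebesgue" using cube_sets'[OF R'(1)] .
  have fin: "emeasure lebesgue R' \<noteq> \<infinity>"
  proof -
    obtain a h where h: "h > 0" "R' = cube a h" using R'(1) by (auto simp: cubes_iff)
    show ?thesis unfolding h(2) by (simp only: cube_emeasure[OF less_imp_le[OF h(1)]]) simp
  qed
  have ib: "set_integrable lebesgue R' b" using cube_int_b[OF R'(1)] .
  have ic: "set_integrable lebesgue R' (\<lambda>_. ?c)"
    using R'(1) by (auto simp: cubes_iff cube_bounded intro!: li_set_integrable li_const)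
  have "(LINT y:R'|lebesgue. b y - ?c) = (LINT y:R'|lebesgue. b y) - ?m * ?c"
    using set_integral_diff(2)[OF ib ic] set_integral_const[OF Rs fin, of ?c] by simp
  then have eq: "cube_avg b R' - ?c = (LINT y:R'|lebesgue. b y - ?c) / ?m"
    using m by (simp add: cube_avg_def field_simps)
  have "\<bar>LINT y:R'|lebesgue. b y - ?c\<bar> \<le> (LINT y:R'|lebesgue. \<bar>b y - ?c\<bar>)"
    using set_integral_norm_bound[OF set_integral_diff(1)[OF ib ic]] by simp
  also have "\<dots> \<le> (LINT y:R|lebesgue. \<bar>b y - ?c\<bar>)"
    by (rule set_integral_mono_set[OF osc_integrable[OF R cube_sets'[OF R] order_refl] R'(2) Rs]) simp
  finally show ?thesis unfolding eq using m by (simp add: divide_right_mono)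
qed

lemma avg_diff_good:
  assumes R: "R \<in> cubes" and R': "R' \<in> cubes" "R' \<subseteq> R" and x: "good x" "x \<in> R"
  shows "\<bar>cube_avg b R' - cube_avg b R\<bar> \<le>
     (measure lebesgue R / measure lebesgue R') * L * C1 * \<mu> x * wmeas \<mu> R powr (\<beta> / real DIM('a))"
proof -
  let ?w = "wmeas \<mu> R" and ?m = "measure lebesgue R" and ?m' = "measure lebesgue R'"
  have w: "0 < ?w" using wmeas_pos[OF R] .
  have "(LINT y:R|lebesgue. \<bar>b y - cube_avg b R\<bar>) \<le> L * ?w powr (1 + \<beta> / real DIM('a))"
    by (rule lip_bound[OF R])
  also have "\<dots> = L * ?w * ?w powr (\<beta> / real DIM('a))"
    using w by (simp add: powr_add)
  also have "\<dots> \<le> L * (C1 * \<mu> x * ?m) * ?w powr (\<beta> / real DIM('a))"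
    using good_bound[OF x(1) R x(2)] by (intro mult_right_mono mult_left_mono) auto
  finally have 1: "(LINT y:R|lebesgue. \<bar>b y - cube_avg b R\<bar>) \<le> L * (C1 * \<mu> x * ?m) * ?w powr (\<beta> / real DIM('a))" .
  have m': "0 < ?m'" using cube_meas_pos[OF R'(1)] .
  have "\<bar>cube_avg b R' - cube_avg b R\<bar> \<le> (LINT y:R|lebesgue. \<bar>b y - cube_avg b R\<bar>) / ?m'"
    by (rule avg_diff[OF R R'])
  also have "\<dots> \<le> (L * (C1 * \<mu> x * ?m) * ?w powr (\<beta> / real DIM('a))) / ?m'"
    using 1 m' by (intro divide_right_mono) auto
  also have "\<dots> = (?m / ?m') * L * C1 * \<mu> x * ?w powr (\<beta> / real DIM('a))"
    by (simp add: field_simps)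
  finally show ?thesis .
qed

end

lemma cube_fin: "emeasure lebesgue (cube a h) \<noteq> \<infinity>"
  using cube_lmeasurable[of a h] unfolding fmeasurable_def by auto

lemma cube_in_cubes: "h > 0 \<Longrightarrow> cube a h \<in> cubes"
  by (auto simp: cubes_iff)

context setting
begin

definition "\<theta> = 1 - (1 - 1 / 2 ^ DIM('a)) / C1"

lemma theta: "0 < \<theta>" "\<theta> < 1"
proof -
  have n: "1 / 2 ^ DIM('a) < (1::real)" "0 < 1 / (2::real) ^ DIM('a)" by auto
  have "(1 - 1 / 2 ^ DIM('a)) * 1 \<le> (1 - 1 / 2 ^ DIM('a)) * C1"
    using C1 n by (intro mult_left_mono) auto
  then have "(1 - 1 / 2 ^ DIM('a)) / C1 \<le> 1 - 1 / 2 ^ DIM('a)"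
    using C1 by (simp add: divide_le_eq)
  moreover have "0 < (1 - 1 / 2 ^ DIM('a)) / C1" using C1 n by auto
  ultimately show "0 < \<theta>" "\<theta> < 1" unfolding \<theta>_def using n by linarith+
qed

lemma decay:
  assumes h: "h > 0" and sub: "cube a' (h/2) \<subseteq> cube a h"
  shows "wmeas \<mu> (cube a' (h/2)) \<le> \<theta> * wmeas \<mu> (cube a h)"
proof -
  let ?R = "cube a h" and ?R' = "cube a' (h/2)"
  let ?w = "wmeas \<mu> ?R" and ?m = "measure lebesgue ?R"
  have R: "?R \<in> cubes" "?R' \<in> cubes" using h by (auto intro: cube_in_cubes)
  have m: "0 < ?m" using cube_meas_pos[OF R(1)] .
  have iR: "set_integrable lebesgue ?R \<mu>" using cube_int_mu[OF R(1)] .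
  have iR': "set_integrable lebesgue ?R' \<mu>" using cube_int_mu[OF R(2)] .
  have iD: "set_integrable lebesgue (?R - ?R') \<mu>"
    by (rule set_integrable_subset[OF iR]) auto
  have un: "?R = ?R' \<union> (?R - ?R')" using sub by blast
  have split: "?w = wmeas \<mu> ?R' + (LINT y:(?R - ?R')|lebesgue. \<mu> y)"
    unfolding wmeas_def by (subst un, rule set_integral_Un[OF _ iR' iD]) auto
  have mD: "measure lebesgue (?R - ?R') = ?m * (1 - 1 / 2 ^ DIM('a))"
  proof -
    have "measure lebesgue (?R - ?R') = ?m - measure lebesgue ?R'"
      by (rule measure_Diff[OF cube_fin]) (use sub in auto)
    also have "\<dots> = h ^ DIM('a) - (h/2) ^ DIM('a)" using h by (simp add: measure_cube)
    also have "\<dots> = ?m * (1 - 1 / 2 ^ DIM('a))" using h by (simp add: measure_cube field_simps power_divide)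
    finally show ?thesis .
  qed
  have "AE y in lebesgue. y \<in> ?R - ?R' \<longrightarrow> ?w / (C1 * ?m) \<le> \<mu> y"
    using AE_good
  proof eventually_elim
    case (elim y)
    show ?case
    proof
      assume "y \<in> ?R - ?R'"
      then have "?w \<le> C1 * \<mu> y * ?m" using good_bound[OF elim R(1)] by auto
      then show "?w / (C1 * ?m) \<le> \<mu> y" using C1 m by (simp add: divide_le_eq mult_ac)
    qed
  qed
  then have "(LINT y:(?R - ?R')|lebesgue. ?w / (C1 * ?m)) \<le> (LINT y:(?R - ?R')|lebesgue. \<mu> y)"
    by (intro set_integral_mono_AE iD) (auto intro!: li_set_integrable li_const bounded_subset[OF cube_bounded])
  moreover have "(LINT y:(?R - ?R')|lebesgue. ?w / (C1 * ?m)) = measure lebesgue (?R - ?R') * (?w / (C1 * ?m))"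
  proof -
    have "?R - ?R' \<in> lmeasurable" by (intro fmeasurable_Diff cube_lmeasurable) simp
    then show ?thesis by (subst set_integral_const) (auto simp: fmeasurable_def)
  qed
  ultimately have "?m * (1 - 1 / 2 ^ DIM('a)) * (?w / (C1 * ?m)) \<le> (LINT y:(?R - ?R')|lebesgue. \<mu> y)"
    unfolding mD by simp
  moreover have "?m * (1 - 1 / 2 ^ DIM('a)) * (?w / (C1 * ?m)) = (1 - 1 / 2 ^ DIM('a)) / C1 * ?w"
    using m C1 by (simp add: field_simps)
  ultimately have "(1 - 1 / 2 ^ DIM('a)) / C1 * ?w \<le> (LINT y:(?R - ?R')|lebesgue. \<mu> y)"
    by simp
  then show ?thesis using split unfolding \<theta>_def by (simp add: algebra_simps)
qed

end

lemma pow_powr: "0 < (t::real) \<Longrightarrow> (t ^ k) powr p = (t powr p) ^ k"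
  by (induction k) (auto simp: powr_mult)

context setting
begin

definition "qq = \<theta> powr (\<beta> / real DIM('a))"

lemma qq: "0 < qq" "qq < 1"
proof -
  have p: "0 < \<beta> / real DIM('a)" using beta by simp
  show "0 < qq" unfolding qq_def using theta by simp
  have "\<theta> powr (\<beta> / real DIM('a)) < 1 powr (\<beta> / real DIM('a))"
    using theta p by (intro powr_less_mono2) auto
  then show "qq < 1" unfolding qq_def by simp
qed

lemma chain:
  assumes x: "good x" and h: "h > 0" and xQ: "x \<in> cube a h"
  shows "\<exists>a'. x \<in> cube a' (h/2^k) \<and> cube a' (h/2^k) \<subseteq> cube a h \<and>
    wmeas \<mu> (cube a' (h/2^k)) \<le> \<theta>^k * wmeas \<mu> (cube a h) \<and>
    \<bar>cube_avg b (cube a' (h/2^k)) - cube_avg b (cube a h)\<bar> \<le>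
      2^DIM('a) * L * C1 * \<mu> x * wmeas \<mu> (cube a h) powr (\<beta> / real DIM('a)) * (\<Sum>i<k. qq^i)"
proof (induction k)
  case 0
  then show ?case using xQ by (intro exI[of _ a]) auto
next
  case (Suc k)
  let ?p = "\<beta> / real DIM('a)" and ?wQ = "wmeas \<mu> (cube a h)"
  let ?K = "2^DIM('a) * L * C1 * \<mu> x"
  have K: "0 \<le> ?K" using C1 mu0[of x] by auto
  have p: "0 \<le> ?p" using beta by simp
  obtain a' where a': "x \<in> cube a' (h/2^k)" "cube a' (h/2^k) \<subseteq> cube a h"
    "wmeas \<mu> (cube a' (h/2^k)) \<le> \<theta>^k * ?wQ"
    "\<bar>cube_avg b (cube a' (h/2^k)) - cube_avg b (cube a h)\<bar> \<le> ?K * ?wQ powr ?p * (\<Sum>i<k. qq^i)"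
    using Suc by blast
  define s where "s = h / 2^k"
  have s: "0 < s" using h by (simp add: s_def)
  have s2: "h / 2 ^ Suc k = s / 2" by (simp add: s_def)
  obtain a'' where a'': "x \<in> cube a'' (s/2)" "cube a'' (s/2) \<subseteq> cube a' s"
    using child_exists[OF a'(1)[folded s_def] s] by blast
  have Rk: "cube a' s \<in> cubes" and Rc: "cube a'' (s/2) \<in> cubes" using s by (auto intro: cube_in_cubes)
  have wk: "0 < wmeas \<mu> (cube a' s)" using wmeas_pos[OF Rk] .
  have d1: "wmeas \<mu> (cube a'' (s/2)) \<le> \<theta> * wmeas \<mu> (cube a' s)"
    by (rule decay[OF s a''(2)])
  have d2: "wmeas \<mu> (cube a'' (s/2)) \<le> \<theta>^Suc k * ?wQ"
    using d1 a'(3)[folded s_def] theta by (simp add: mult_left_mono order_trans)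
  have ratio: "measure lebesgue (cube a' s) / measure lebesgue (cube a'' (s/2)) = 2^DIM('a)"
    using s by (simp add: measure_cube power_divide)
  have "\<bar>cube_avg b (cube a'' (s/2)) - cube_avg b (cube a' s)\<bar> \<le> ?K * wmeas \<mu> (cube a' s) powr ?p"
    using avg_diff_good[OF Rk Rc a''(2) x a'(1)[folded s_def]] unfolding ratio by (simp add: mult_ac)
  also have "\<dots> \<le> ?K * (\<theta>^k * ?wQ) powr ?p"
    using a'(3)[folded s_def] wk p K by (intro mult_left_mono powr_mono2) auto
  also have "\<dots> = ?K * ?wQ powr ?p * qq^k"
    using theta by (simp add: powr_mult pow_powr qq_def mult_ac)
  finally have step: "\<bar>cube_avg b (cube a'' (s/2)) - cube_avg b (cube a' s)\<bar> \<le> ?K * ?wQ powr ?p * qq^k" .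
  have "\<bar>cube_avg b (cube a'' (s/2)) - cube_avg b (cube a h)\<bar> \<le>
      \<bar>cube_avg b (cube a'' (s/2)) - cube_avg b (cube a' s)\<bar> + \<bar>cube_avg b (cube a' s) - cube_avg b (cube a h)\<bar>"
    by linarith
  also have "\<dots> \<le> ?K * ?wQ powr ?p * qq^k + ?K * ?wQ powr ?p * (\<Sum>i<k. qq^i)"
    using step a'(4)[folded s_def] by linarith
  also have "\<dots> = ?K * ?wQ powr ?p * (\<Sum>i<Suc k. qq^i)"
    by (simp add: algebra_simps)
  finally show ?case unfolding s2
    using a''(1) a''(2) a'(2)[folded s_def] d2 by (intro exI[of _ a'']) auto
qed

definition "K0 = 2^DIM('a) * C1 / (1 - qq)"

lemma K0_pos: "0 < K0" using qq C1 by (simp add: K0_def)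

lemma chain_small:
  assumes x: "good x" and Q: "Q \<in> cubes" "x \<in> Q" and rho: "0 < \<rho>"
  shows "\<exists>a' s. 0 < s \<and> s < \<rho> \<and> x \<in> cube a' s \<and> cube a' s \<subseteq> Q \<and>
    \<bar>cube_avg b (cube a' s) - cube_avg b Q\<bar> \<le> K0 * L * \<mu> x * wmeas \<mu> Q powr (\<beta> / real DIM('a))"
proof -
  obtain a h where h: "h > 0" and Qe: "Q = cube a h" using Q(1) by (auto simp: cubes_iff)
  obtain k where k: "h / \<rho> < 2 ^ k" using real_arch_pow[of 2 "h / \<rho>"] by auto
  have sk: "h / 2^k < \<rho>" using k rho by (simp add: divide_less_eq mult.commute)
  obtain a' where a': "x \<in> cube a' (h/2^k)" "cube a' (h/2^k) \<subseteq> cube a h"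
    "\<bar>cube_avg b (cube a' (h/2^k)) - cube_avg b (cube a h)\<bar> \<le>
      2^DIM('a) * L * C1 * \<mu> x * wmeas \<mu> (cube a h) powr (\<beta> / real DIM('a)) * (\<Sum>i<k. qq^i)"
    using chain[OF x h Q(2)[unfolded Qe], of k] by blast
  have "(\<Sum>i<k. qq^i) \<le> 1 / (1 - qq)"
    using qq by (simp add: sum_gp_strict divide_right_mono)
  then have "2^DIM('a) * L * C1 * \<mu> x * wmeas \<mu> (cube a h) powr (\<beta> / real DIM('a)) * (\<Sum>i<k. qq^i)
      \<le> 2^DIM('a) * L * C1 * \<mu> x * wmeas \<mu> (cube a h) powr (\<beta> / real DIM('a)) * (1 / (1 - qq))"
    using C1 mu0[of x] by (intro mult_left_mono) auto
  also have "\<dots> = K0 * L * \<mu> x * wmeas \<mu> Q powr (\<beta> / real DIM('a))"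
    unfolding K0_def Qe by (simp add: field_simps)
  finally show ?thesis using a' h sk Qe by (intro exI[of _ a'] exI[of _ "h/2^k"]) auto
qed

end

lemma centered:
  fixes x a' :: "'a::euclidean_space"
  assumes x: "x \<in> cube a' s" and s: "0 < s"
  shows "cube a' s \<subseteq> cube (x - s *\<^sub>R One) (2 * s)" "x \<in> cube (x - s *\<^sub>R One) (2 * s)"
    "ball x s \<subseteq> cube (x - s *\<^sub>R One) (2 * s)"
proof -
  show "cube a' s \<subseteq> cube (x - s *\<^sub>R One) (2 * s)"
    by (rule cube_subset) (use x in \<open>auto simp: mem_cube inner_diff_left\<close>)
  show "x \<in> cube (x - s *\<^sub>R One) (2 * s)" using s by (auto simp: mem_cube inner_diff_left)
  show "ball x s \<subseteq> cube (x - s *\<^sub>R One) (2 * s)"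
  proof
    fix y assume "y \<in> ball x s"
    then have "norm (y - x) < s" by (simp add: dist_norm norm_minus_commute)
    then have "\<bar>(y - x) \<bullet> i\<bar> < s" if "i \<in> Basis" for i
      using Basis_le_norm[OF that, of "y - x"] by linarith
    then have "x \<bullet> i - s \<le> y \<bullet> i \<and> y \<bullet> i \<le> x \<bullet> i - s + 2 * s" if "i \<in> Basis" for i
      using that by (fastforce simp: inner_diff_left abs_less_iff)
    then show "y \<in> cube (x - s *\<^sub>R One) (2 * s)"
      by (auto simp: mem_cube inner_diff_left)
  qed
qed

lemma ball_measure:
  fixes x :: "'a::euclidean_space"
  assumes "0 \<le> s"
  shows "measure lebesgue (ball x s) = s ^ DIM('a) * measure lebesgue (ball (0::'a) 1)"
  using content_ball_conv_unit_ball[OF assms, of x] by simp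

lemma powr_cube:
  fixes A s \<beta> :: real
  assumes "0 < s" "0 \<le> A" and that: "n > 0"
  shows "(A * s ^ n) powr (\<beta> / real n) = A powr (\<beta> / real n) * s powr \<beta>"
proof -
  have "(s ^ n) powr (\<beta> / real n) = (s powr real n) powr (\<beta> / real n)"
    using assms by (simp add: powr_realpow)
  also have "\<dots> = s powr \<beta>" using that by (simp add: powr_powr)
  finally show ?thesis by (simp add: powr_mult)
qed

context setting
begin

definition "Sjk j k = {x. good x \<and> (\<exists>Q\<in>cubes. x \<in> Q \<and>
   K0 * L * \<mu> x * wmeas \<mu> Q powr (\<beta> / real DIM('a)) + 3 / real (Suc j) < \<bar>b x - cube_avg b Q\<bar>) \<and>
   of_int k \<le> real (Suc j) * b x \<and> real (Suc j) * b x < of_int k + 1}"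

lemma Sjk_close:
  assumes "x \<in> Sjk j k" "y \<in> Sjk j k"
  shows "\<bar>b y - b x\<bar> < 1 / real (Suc j)"
proof -
  have "\<bar>real (Suc j) * b y - real (Suc j) * b x\<bar> < 1" using assms unfolding Sjk_def by auto
  then have "real (Suc j) * \<bar>b y - b x\<bar> < 1" by (simp add: right_diff_distrib[symmetric] abs_mult)
  then show ?thesis by (simp add: field_simps)
qed

end

context setting
begin

lemma Sjk_negligible: "negligible (Sjk j k)"
  unfolding negligible_eq_zero_density
proof (intro ballI allI impI)
  fix x and r e :: real
  assume xS: "x \<in> Sjk j k" and r: "0 < r" and e: "0 < e"
  define J where "J = real (Suc j)"
  let ?p = "\<beta> / real DIM('a)"
  have J: "0 < J" unfolding J_def by simp
  obtain Q where x: "good x" and Q: "Q \<in> cubes" "x \<in> Q"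
    and gap: "K0 * L * \<mu> x * wmeas \<mu> Q powr ?p + 3 / J < \<bar>b x - cube_avg b Q\<bar>"
    using xS unfolding Sjk_def J_def by blast
  have mux: "0 < \<mu> x" using x unfolding good_def by auto
  define A where "A = C1 * \<mu> x * 2 ^ DIM('a)"
  have A: "0 < A" using C1 mux unfolding A_def by auto
  define V where "V = measure lebesgue (ball (0::'a) 1)"
  have V: "0 < V" unfolding V_def using content_ball_pos[of 1 "0::'a"] by simp
  define c1 where "c1 = 2 ^ DIM('a) * L * C1 * \<mu> x"
  define c2 where "c2 = J * L * A"
  have c1: "0 \<le> c1" and c2: "0 \<le> c2" unfolding c1_def c2_def using C1 mux J A by auto
  define \<epsilon> where "\<epsilon> = min (1 / (J * (c1 + 1))) (e * V / (c2 + 1))"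
  have \<epsilon>: "0 < \<epsilon>" unfolding \<epsilon>_def using J c1 c2 e V by auto
  have "((\<lambda>s. A powr ?p * s powr \<beta>) \<longlongrightarrow> A powr ?p * 0) (at_right 0)"
    by (intro tendsto_mult tendsto_const tendsto_zero_powrI[of "\<lambda>s. s"])
       (auto simp: beta eventually_at_right_field intro!: exI[of _ 1] tendsto_ident_at)
  then have "eventually (\<lambda>s. A powr ?p * s powr \<beta> < \<epsilon>) (at_right 0)"
    using \<epsilon> by (auto dest: order_tendstoD(2))
  moreover have "eventually (\<lambda>s. s < r) (at_right (0::real))"
    using r unfolding eventually_at_right_field by (intro exI[of _ r]) auto
  ultimately have "eventually (\<lambda>s. A powr ?p * s powr \<beta> < \<epsilon> \<and> s < r) (at_right 0)"
    by (rule eventually_conj)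
  then obtain b0 :: real where b0: "0 < b0" and b0P: "\<And>s. 0 < s \<Longrightarrow> s < b0 \<Longrightarrow> A powr ?p * s powr \<beta> < \<epsilon> \<and> s < r"
    unfolding eventually_at_right_field by auto
  obtain a' s where s: "0 < s" "s < b0" and xR: "x \<in> cube a' s" and RQ: "cube a' s \<subseteq> Q"
    and chainb: "\<bar>cube_avg b (cube a' s) - cube_avg b Q\<bar> \<le> K0 * L * \<mu> x * wmeas \<mu> Q powr ?p"
    using chain_small[OF x Q b0] by blast
  have sP: "A powr ?p * s powr \<beta> < \<epsilon>" "s < r" using b0P[OF s] by auto
  define R where "R = cube a' s"
  define R' where "R' = cube (x - s *\<^sub>R One) (2 * s)"
  have RR': "R \<subseteq> R'" "x \<in> R'" "ball x s \<subseteq> R'"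
    using centered[OF xR s(1)] unfolding R_def R'_def by auto
  have Rc: "R \<in> cubes" "R' \<in> cubes" unfolding R_def R'_def using s by (auto intro: cube_in_cubes)
  have mR': "measure lebesgue R' = 2 ^ DIM('a) * s ^ DIM('a)"
    unfolding R'_def using s by (simp add: measure_cube power_mult_distrib)
  have mR: "measure lebesgue R = s ^ DIM('a)"
    unfolding R_def using s by (simp add: measure_cube)
  have wR'pos: "0 < wmeas \<mu> R'" using wmeas_pos[OF Rc(2)] .
  have wR': "wmeas \<mu> R' \<le> A * s ^ DIM('a)"
    using good_bound[OF x Rc(2) RR'(2)] unfolding mR' A_def by (simp add: mult_ac)
  have wR'p: "wmeas \<mu> R' powr ?p \<le> A powr ?p * s powr \<beta>"
  proof -
    have "wmeas \<mu> R' powr ?p \<le> (A * s ^ DIM('a)) powr ?p"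
      using wR' wR'pos beta by (intro powr_mono2) auto
    also have "\<dots> = A powr ?p * s powr \<beta>"
      using s A by (intro powr_cube) auto
    finally show ?thesis .
  qed
  have t0: "0 \<le> A powr ?p * s powr \<beta>" by simp
  have "\<bar>cube_avg b R - cube_avg b R'\<bar> \<le>
     (measure lebesgue R' / measure lebesgue R) * L * C1 * \<mu> x * wmeas \<mu> R' powr ?p"
    by (rule avg_diff_good[OF Rc(2) Rc(1) RR'(1) x RR'(2)])
  also have "\<dots> = c1 * wmeas \<mu> R' powr ?p"
    unfolding mR mR' c1_def using s by (simp add: field_simps)
  also have "\<dots> \<le> c1 * (A powr ?p * s powr \<beta>)"
    using wR'p c1 by (intro mult_left_mono) auto
  also have "\<dots> \<le> (c1 + 1) * (A powr ?p * s powr \<beta>)"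
    using t0 by (intro mult_right_mono) auto
  also have "\<dots> < (c1 + 1) * \<epsilon>"
    using sP(1) c1 by (intro mult_strict_left_mono) auto
  also have "\<dots> \<le> (c1 + 1) * (1 / (J * (c1 + 1)))"
    using c1 unfolding \<epsilon>_def by (intro mult_left_mono) auto
  also have "\<dots> = 1 / J"
  proof -
    have "0 < J * c1 + J" using c1 J by (simp add: add_nonneg_pos)
    then show ?thesis using c1 J by (simp add: field_simps)
  qed
  finally have avgRR': "\<bar>cube_avg b R - cube_avg b R'\<bar> < 1 / J" .
  have bxR': "2 / J < \<bar>b x - cube_avg b R'\<bar>"
    using gap chainb avgRR' unfolding R_def by (simp add: field_simps)
  define U where "U = {y \<in> R'. 1 / J \<le> \<bar>b y - cube_avg b R'\<bar>}"
  have R's[measurable]: "R' \<in> sets lebesgue" using cube_sets'[OF Rc(2)] .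
  have Us: "U \<in> sets lebesgue" unfolding U_def by measurable
  have Ulm: "U \<in> lmeasurable"
  proof (rule fmeasurableI2[OF _ _ Us])
    show "R' \<in> lmeasurable" unfolding R'_def by (rule cube_lmeasurable)
    show "U \<subseteq> R'" unfolding U_def by auto
  qed
  have sub: "Sjk j k \<inter> ball x s \<subseteq> U"
  proof
    fix y assume y: "y \<in> Sjk j k \<inter> ball x s"
    then have "\<bar>b y - b x\<bar> < 1 / J" using Sjk_close[OF xS] unfolding J_def by auto
    then have "1 / J \<le> \<bar>b y - cube_avg b R'\<bar>" using bxR' by (simp add: field_simps)
    then show "y \<in> U" using y RR'(3) unfolding U_def by auto
  qed
  have "measure lebesgue U \<le> (LINT y:R'|lebesgue. \<bar>b y - cube_avg b R'\<bar>) / (1 / J)"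
    unfolding U_def
    by (rule integral_Markov_inequality'_measure[OF osc_integrable[OF Rc(2) R's order_refl] R's]) (auto simp: J)
  also have "\<dots> = J * (LINT y:R'|lebesgue. \<bar>b y - cube_avg b R'\<bar>)" by simp
  also have "\<dots> \<le> J * (L * wmeas \<mu> R' powr (1 + ?p))"
    using lip_bound[OF Rc(2)] J by (intro mult_left_mono) auto
  also have "\<dots> = J * L * wmeas \<mu> R' * wmeas \<mu> R' powr ?p"
    using wR'pos by (simp add: powr_add mult_ac)
  also have "\<dots> \<le> J * L * (A * s ^ DIM('a)) * (A powr ?p * s powr \<beta>)"
    using wR' wR'p J wR'pos by (intro mult_mono mult_left_mono) auto
  also have "\<dots> = c2 * (A powr ?p * s powr \<beta>) * s ^ DIM('a)"
    unfolding c2_def by (simp add: mult_ac)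
  also have "\<dots> \<le> (c2 + 1) * (A powr ?p * s powr \<beta>) * s ^ DIM('a)"
    using t0 s by (intro mult_right_mono) auto
  also have "\<dots> < (c2 + 1) * \<epsilon> * s ^ DIM('a)"
    using sP(1) c2 s by (intro mult_strict_right_mono mult_strict_left_mono) auto
  also have "\<dots> \<le> (c2 + 1) * (e * V / (c2 + 1)) * s ^ DIM('a)"
    using c2 s unfolding \<epsilon>_def by (intro mult_right_mono mult_left_mono) auto
  also have "\<dots> = e * (s ^ DIM('a) * V)"
  proof -
    have "c2 + 1 \<noteq> 0" using c2 by simp
    then show ?thesis by (simp add: field_simps)
  qed
  also have "\<dots> = e * measure lebesgue (ball x s)"
    using ball_measure[of s x] s unfolding V_def by simp
  finally have "measure lebesgue U < e * measure lebesgue (ball x s)" .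
  then show "\<exists>d>0. d \<le> r \<and> (\<exists>U. Sjk j k \<inter> ball x d \<subseteq> U \<and> U \<in> lmeasurable \<and>
      measure lebesgue U < e * measure lebesgue (ball x d))"
    using s sP(2) sub Ulm by (intro exI[of _ s] conjI exI[of _ U]) auto
qed

end

context setting
begin

lemma AE_GB: "AE x in lebesgue. good x \<and> (\<forall>Q\<in>cubes. x \<in> Q \<longrightarrow>
   \<bar>b x - cube_avg b Q\<bar> \<le> K0 * L * \<mu> x * wmeas \<mu> Q powr (\<beta> / real DIM('a)))"
proof -
  define N where "N = \<Union> (case_prod Sjk ` UNIV)"
  have "negligible N" unfolding N_def
    by (rule negligible_countable_Union) (auto intro: Sjk_negligible)
  then have "AE x in lebesgue. x \<notin> N"
    by (intro AE_not_in) (simp add: negligible_iff_null_sets)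
  then show ?thesis using AE_good
  proof eventually_elim
    case (elim x)
    show ?case
    proof (intro conjI ballI impI)
      show "good x" by (rule elim(2))
      fix Q assume Q: "Q \<in> cubes" "x \<in> Q"
      show "\<bar>b x - cube_avg b Q\<bar> \<le> K0 * L * \<mu> x * wmeas \<mu> Q powr (\<beta> / real DIM('a))"
      proof (rule ccontr)
        let ?g = "\<bar>b x - cube_avg b Q\<bar> - K0 * L * \<mu> x * wmeas \<mu> Q powr (\<beta> / real DIM('a))"
        assume "\<not> ?thesis"
        then have g: "0 < ?g" by simp
        obtain j :: nat where j: "3 / ?g < real j" using reals_Archimedean2 by blast
        then have "3 / ?g < real (Suc j)" by simp
        then have "3 / real (Suc j) < ?g" using g by (simp add: field_simps)
        then have "x \<in> Sjk j (floor (real (Suc j) * b x))"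
          unfolding Sjk_def using elim(2) Q by (auto intro!: bexI[of _ Q])
        then have "x \<in> N" unfolding N_def by auto
        then show False using elim(1) by simp
      qed
    qed
  qed
qed

end

lemma young_pt:
  fixes t a r :: real
  assumes t: "0 \<le> t" and a: "0 < a" and r: "1 < r"
  shows "t \<le> a powr (1 - r) * t powr r / r + a * (1 - 1 / r)"
proof -
  let ?q = "r / (r - 1)"
  have q: "1 < ?q" using r by (simp add: field_simps)
  have pq: "1 / r + 1 / ?q = 1" using r by (simp add: field_simps)
  have "t / a * 1 \<le> (t / a) powr r / r + 1 powr ?q / ?q"
    by (rule Youngs_inequality[OF r q pq]) (use t a in auto)
  then have 1: "t / a \<le> (t / a) powr r / r + (1 - 1 / r)"
    using r by (simp add: field_simps)
  have "t = a * (t / a)" using a by simp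
  also have "\<dots> \<le> a * ((t / a) powr r / r + (1 - 1 / r))"
    using 1 a by (intro mult_left_mono) auto
  also have "\<dots> = a * (t / a) powr r / r + a * (1 - 1 / r)" by (simp add: distrib_left)
  also have "a * (t / a) powr r = a powr (1 - r) * t powr r"
    using a t by (simp add: powr_divide powr_diff)
  finally show ?thesis .
qed

context setting
begin

lemma holder:
  assumes Q: "Q \<in> cubes" and f[measurable]: "f \<in> borel_measurable lebesgue" and r: "1 < r"
    and fin: "(\<integral>\<^sup>+y\<in>Q. ennreal (\<bar>f y\<bar> powr r * \<mu> y) \<partial>lebesgue) \<noteq> \<infinity>"
  shows "(\<integral>\<^sup>+y\<in>Q. ennreal (\<bar>f y\<bar> * \<mu> y) \<partial>lebesgue) \<le>
    ennreal ((enn2real (\<integral>\<^sup>+y\<in>Q. ennreal (\<bar>f y\<bar> powr r * \<mu> y) \<partial>lebesgue) / wmeas \<mu> Q) powr (1 / r) * wmeas \<mu> Q)"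
proof -
  have Qs[measurable]: "Q \<in> sets lebesgue" using cube_sets'[OF Q] .
  let ?N = "\<integral>\<^sup>+y\<in>Q. ennreal (\<bar>f y\<bar> powr r * \<mu> y) \<partial>lebesgue"
  define I where "I = enn2real ?N"
  define w where "w = wmeas \<mu> Q"
  have w: "0 < w" unfolding w_def using wmeas_pos[OF Q] .
  have NI: "?N = ennreal I" unfolding I_def using fin by (simp add: ennreal_enn2real_if less_top)
  have I0: "0 \<le> I" unfolding I_def by simp
  show ?thesis
  proof (cases "I = 0")
    case True
    then have "?N = 0" using NI by simp
    then have "AE y in lebesgue. ennreal (\<bar>f y\<bar> powr r * \<mu> y) * indicator Q y = 0"
      by (subst (asm) nn_integral_0_iff_AE) auto
    then have "AE y in lebesgue. ennreal (\<bar>f y\<bar> * \<mu> y) * indicator Q y = 0"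
    proof eventually_elim
      case (elim y)
      show ?case
      proof (cases "y \<in> Q")
        case True
        then have "\<bar>f y\<bar> powr r * \<mu> y \<le> 0" using elim by (simp add: ennreal_eq_0_iff)
        moreover have "0 \<le> \<bar>f y\<bar> powr r * \<mu> y" using mu0[of y] by simp
        ultimately have "\<bar>f y\<bar> powr r * \<mu> y = 0" by linarith
        then have "\<bar>f y\<bar> powr r = 0 \<or> \<mu> y = 0" by simp
        then have "\<bar>f y\<bar> * \<mu> y = 0" by auto
        then show ?thesis by (simp only: ennreal_0 mult_zero_left)
      qed simp
    qed
    then have "(\<integral>\<^sup>+y\<in>Q. ennreal (\<bar>f y\<bar> * \<mu> y) \<partial>lebesgue) = 0"
      by (subst nn_integral_0_iff_AE) auto
    then show ?thesis by simp
  next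
    case False
    then have Ipos: "0 < I" using I0 by simp
    define a where "a = (I / w) powr (1 / r)"
    have a: "0 < a" unfolding a_def using Ipos w by simp
    define c1 where "c1 = a powr (1 - r) / r"
    define c2 where "c2 = a * (1 - 1 / r)"
    have c1: "0 \<le> c1" and c2: "0 \<le> c2" unfolding c1_def c2_def using a r by auto
    have ar: "a powr r = I / w" unfolding a_def using r Ipos w by (simp add: powr_powr)
    have "(\<integral>\<^sup>+y\<in>Q. ennreal (\<bar>f y\<bar> * \<mu> y) \<partial>lebesgue) \<le>
        (\<integral>\<^sup>+y\<in>Q. (ennreal c1 * ennreal (\<bar>f y\<bar> powr r * \<mu> y) + ennreal c2 * ennreal (\<mu> y)) \<partial>lebesgue)"
    proof (intro nn_integral_mono)
      fix y
      have "\<bar>f y\<bar> \<le> c1 * \<bar>f y\<bar> powr r + c2"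
        using young_pt[OF _ a r, of "\<bar>f y\<bar>"] unfolding c1_def c2_def by simp
      then have "\<bar>f y\<bar> * \<mu> y \<le> (c1 * \<bar>f y\<bar> powr r + c2) * \<mu> y"
        using mu0[of y] by (intro mult_right_mono) auto
      then have "ennreal (\<bar>f y\<bar> * \<mu> y) \<le> ennreal (c1 * (\<bar>f y\<bar> powr r * \<mu> y) + c2 * \<mu> y)"
        by (intro ennreal_leI) (simp add: algebra_simps)
      also have "\<dots> = ennreal c1 * ennreal (\<bar>f y\<bar> powr r * \<mu> y) + ennreal c2 * ennreal (\<mu> y)"
        using c1 c2 mu0[of y] by (simp add: ennreal_plus ennreal_mult)
      finally show "ennreal (\<bar>f y\<bar> * \<mu> y) * indicator Q y \<le>
          (ennreal c1 * ennreal (\<bar>f y\<bar> powr r * \<mu> y) + ennreal c2 * ennreal (\<mu> y)) * indicator Q y"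
        by (intro mult_right_mono) auto
    qed
    also have "\<dots> = (\<integral>\<^sup>+y\<in>Q. ennreal c1 * ennreal (\<bar>f y\<bar> powr r * \<mu> y) \<partial>lebesgue) +
        (\<integral>\<^sup>+y\<in>Q. ennreal c2 * ennreal (\<mu> y) \<partial>lebesgue)"
      by (rule nn_set_integral_add) auto
    also have "(\<integral>\<^sup>+y\<in>Q. ennreal c1 * ennreal (\<bar>f y\<bar> powr r * \<mu> y) \<partial>lebesgue) = ennreal c1 * ?N"
      by (subst nn_integral_cmult[symmetric]) (auto simp: mult_ac)
    also have "(\<integral>\<^sup>+y\<in>Q. ennreal c2 * ennreal (\<mu> y) \<partial>lebesgue) = ennreal c2 * (\<integral>\<^sup>+y\<in>Q. ennreal (\<mu> y) \<partial>lebesgue)"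
      by (subst nn_integral_cmult[symmetric]) (auto simp: mult_ac)
    also have "(\<integral>\<^sup>+y\<in>Q. ennreal (\<mu> y) \<partial>lebesgue) = ennreal w"
      unfolding w_def by (rule wmeas_finite_nn[OF Q])
    also have "ennreal c1 * ?N + ennreal c2 * ennreal w = ennreal (c1 * I + c2 * w)"
      unfolding NI using c1 c2 I0 w by (simp add: ennreal_plus ennreal_mult)
    also have "c1 * I + c2 * w = a * w"
    proof -
      have "a powr (1 - r) * I = a * w"
        using a w Ipos ar by (simp add: powr_diff field_simps)
      then show ?thesis unfolding c1_def c2_def using r by (simp add: field_simps)
    qed
    finally show ?thesis unfolding a_def w_def I_def .
  qed
qed

end

context setting
begin

definition "GB x \<longleftrightarrow> good x \<and> (\<forall>Q\<in>cubes. x \<in> Q \<longrightarrow>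
   \<bar>b x - cube_avg b Q\<bar> \<le> K0 * L * \<mu> x * wmeas \<mu> Q powr (\<beta> / real DIM('a)))"

lemma AE_GB': "AE x in lebesgue. GB x"
  using AE_GB unfolding GB_def .

lemma pointwise:
  assumes x: "GB x" and y: "GB y" and Q: "Q \<in> cubes" "x \<in> Q" "y \<in> Q"
  shows "\<bar>b x - b y\<bar> \<le> (2 * K0 * C1 * L * \<mu> x * (measure lebesgue Q / wmeas \<mu> Q) * wmeas \<mu> Q powr (\<beta> / real DIM('a))) * \<mu> y"
proof -
  let ?w = "wmeas \<mu> Q" and ?m = "measure lebesgue Q" and ?P = "wmeas \<mu> Q powr (\<beta> / real DIM('a))"
  have w: "0 < ?w" using wmeas_pos[OF Q(1)] .
  have m: "0 < ?m" using cube_meas_pos[OF Q(1)] .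
  have gx: "good x" and gy: "good y" using x y unfolding GB_def by auto
  have mx: "0 < \<mu> x" and my: "0 < \<mu> y" using gx gy unfolding good_def by auto
  have bx: "\<bar>b x - cube_avg b Q\<bar> \<le> K0 * L * \<mu> x * ?P" using x Q unfolding GB_def by auto
  have by': "\<bar>b y - cube_avg b Q\<bar> \<le> K0 * L * \<mu> y * ?P" using y Q unfolding GB_def by auto
  have K0L: "0 \<le> K0 * L * ?P" using K0_pos by simp
  have r1: "1 \<le> C1 * \<mu> y * ?m / ?w" using good_bound[OF gy Q(1) Q(3)] w by simp
  have r2: "1 \<le> C1 * \<mu> x * ?m / ?w" using good_bound[OF gx Q(1) Q(2)] w by simp
  define X where "X = \<mu> x * (C1 * \<mu> y * ?m / ?w)"
  have a1: "\<mu> x \<le> X" unfolding X_def using mult_left_mono[OF r1, of "\<mu> x"] mx by simp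
  have "\<mu> y \<le> \<mu> y * (C1 * \<mu> x * ?m / ?w)" using mult_left_mono[OF r2, of "\<mu> y"] my by simp
  also have "\<mu> y * (C1 * \<mu> x * ?m / ?w) = X" unfolding X_def using w by (simp add: field_simps)
  finally have a2: "\<mu> y \<le> X" .
  have e: "2 * C1 * \<mu> x * (?m / ?w) * \<mu> y = X + X" unfolding X_def using w by (simp add: field_simps)
  have sum: "\<mu> x + \<mu> y \<le> 2 * C1 * \<mu> x * (?m / ?w) * \<mu> y"
    unfolding e by (rule add_mono[OF a1 a2])
  have "\<bar>b x - b y\<bar> \<le> \<bar>b x - cube_avg b Q\<bar> + \<bar>b y - cube_avg b Q\<bar>" by linarith
  also have "\<dots> \<le> K0 * L * ?P * (\<mu> x + \<mu> y)" using bx by' by (simp add: field_simps)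
  also have "\<dots> \<le> K0 * L * ?P * (2 * C1 * \<mu> x * (?m / ?w) * \<mu> y)"
    using sum K0L by (intro mult_left_mono) auto
  finally show ?thesis by (simp add: mult_ac)
qed

lemma T_identity:
  assumes w: "0 < w" and I: "0 \<le> I" and r: "1 < r"
  shows "(I / w powr (1 - r * \<beta> / real DIM('a))) powr (1 / r) = (I / w) powr (1 / r) * w powr (\<beta> / real DIM('a))"
proof -
  have wk: "w powr (1 - r * \<beta> / real DIM('a)) = w / w powr (r * \<beta> / real DIM('a))"
    using w by (simp add: powr_diff)
  have "0 < w powr (r * \<beta> / real DIM('a))" using w by simp
  then have "I / w powr (1 - r * \<beta> / real DIM('a)) = (I / w) * w powr (r * \<beta> / real DIM('a))"
    unfolding wk using w by (simp add: field_simps)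
  then have "(I / w powr (1 - r * \<beta> / real DIM('a))) powr (1 / r) = (I / w) powr (1 / r) * (w powr (r * \<beta> / real DIM('a))) powr (1 / r)"
    by (simp only: powr_mult)
  also have "(w powr (r * \<beta> / real DIM('a))) powr (1 / r) = w powr (\<beta> / real DIM('a))"
    using r by (simp add: powr_powr)
  finally show ?thesis .
qed

lemma main_cube:
  assumes x: "GB x" and Q: "Q \<in> cubes" "x \<in> Q" and f[measurable]: "f \<in> borel_measurable lebesgue" and r: "1 < r"
  shows "ennreal (1 / measure lebesgue Q) * (\<integral>\<^sup>+y\<in>Q. ennreal (\<bar>b x - b y\<bar> * \<bar>f y\<bar>) \<partial>lebesgue)
    \<le> ennreal (2 * K0 * C1) * lip_norm \<beta> \<mu> b * ennreal (\<mu> x) * Mfrac \<beta> \<mu> r f x"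
proof -
  have Qs[measurable]: "Q \<in> sets lebesgue" using cube_sets'[OF Q(1)] .
  let ?w = "wmeas \<mu> Q" and ?m = "measure lebesgue Q" and ?P = "wmeas \<mu> Q powr (\<beta> / real DIM('a))"
  let ?N = "\<integral>\<^sup>+y\<in>Q. ennreal (\<bar>f y\<bar> powr r * \<mu> y) \<partial>lebesgue"
  let ?J = "\<integral>\<^sup>+y\<in>Q. ennreal (\<bar>f y\<bar> * \<mu> y) \<partial>lebesgue"
  define C where "C = 2 * K0 * C1"
  have C: "0 < C" unfolding C_def using K0_pos C1 by simp
  have w: "0 < ?w" using wmeas_pos[OF Q(1)] .
  have m: "0 < ?m" using cube_meas_pos[OF Q(1)] .
  have gx: "good x" using x unfolding GB_def by auto
  have mx: "0 < \<mu> x" using gx unfolding good_def by auto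
  define D where "D = 2 * K0 * C1 * L * \<mu> x * (?m / ?w) * ?P"
  have D: "0 \<le> D" unfolding D_def using K0_pos C1 mx w m by simp
  have "(\<integral>\<^sup>+y\<in>Q. ennreal (\<bar>b x - b y\<bar> * \<bar>f y\<bar>) \<partial>lebesgue) \<le> (\<integral>\<^sup>+y\<in>Q. ennreal D * ennreal (\<bar>f y\<bar> * \<mu> y) \<partial>lebesgue)"
    using AE_GB'
  proof (intro nn_integral_mono_AE, eventually_elim)
    case (elim y)
    show ?case
    proof (cases "y \<in> Q")
      case True
      have gy: "GB y" using elim by auto
      have "\<bar>b x - b y\<bar> * \<bar>f y\<bar> \<le> (D * \<mu> y) * \<bar>f y\<bar>"
        using pointwise[OF x gy Q True] unfolding D_def by (intro mult_right_mono) auto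
      then have "ennreal (\<bar>b x - b y\<bar> * \<bar>f y\<bar>) \<le> ennreal (D * (\<bar>f y\<bar> * \<mu> y))"
        by (intro ennreal_leI) (simp add: mult_ac)
      also have "\<dots> = ennreal D * ennreal (\<bar>f y\<bar> * \<mu> y)"
        using D mu0[of y] by (simp add: ennreal_mult)
      finally show ?thesis using True by simp
    qed simp
  qed
  also have "\<dots> = ennreal D * ?J"
    by (subst nn_integral_cmult[symmetric]) (auto simp: mult_ac)
  finally have LJ: "(\<integral>\<^sup>+y\<in>Q. ennreal (\<bar>b x - b y\<bar> * \<bar>f y\<bar>) \<partial>lebesgue) \<le> ennreal D * ?J" .
  define T where "T = (let I = ?N in if I = \<infinity> then \<infinity>
       else ennreal ((enn2real I / wmeas \<mu> Q powr (1 - r * \<beta> / real DIM('a))) powr (1 / r)))"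
  have TM: "T \<le> Mfrac \<beta> \<mu> r f x"
  proof -
    have e: "Mfrac \<beta> \<mu> r f x = (SUP Q\<in>{Q\<in>cubes. x \<in> Q}.
      (let I = (\<integral>\<^sup>+ y\<in>Q. ennreal (\<bar>f y\<bar> powr r * \<mu> y) \<partial>lebesgue) in
       if I = \<infinity> then \<infinity>
       else ennreal ((enn2real I / wmeas \<mu> Q powr (1 - r * \<beta> / real DIM('a))) powr (1 / r))))"
      by (rule Mfrac_def)
    show ?thesis unfolding T_def
      apply (rule order_trans[OF _ eq_refl[OF e[symmetric]]])
      apply (rule SUP_upper)
      using Q apply simp
      done
  qed
  have lipL: "lip_norm \<beta> \<mu> b = ennreal L" by (rule lip_eq)
  show ?thesis
  proof (cases "?N = \<infinity>")
    case True
    then have Tinf: "T = \<infinity>" unfolding T_def by simp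
    show ?thesis
    proof (cases "L = 0")
      case True
      then have "D = 0" unfolding D_def by simp
      then have "(\<integral>\<^sup>+y\<in>Q. ennreal (\<bar>b x - b y\<bar> * \<bar>f y\<bar>) \<partial>lebesgue) = 0" using LJ by simp
      then show ?thesis by simp
    next
      case False
      then have "0 < L" using L_nonneg by linarith
      then have "ennreal C * ennreal L * ennreal (\<mu> x) * T = \<infinity>"
        using C mx Tinf by (simp add: ennreal_mult_eq_top_iff)
      then have "ennreal C * ennreal L * ennreal (\<mu> x) * Mfrac \<beta> \<mu> r f x = \<infinity>"
        using TM Tinf by (simp add: top_unique)
      then show ?thesis by (subst lipL) (simp add: C_def)
    qed
  next
    case False
    define I where "I = enn2real ?N"
    have I0: "0 \<le> I" unfolding I_def by simp
    define a where "a = (I / ?w) powr (1 / r)"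
    have T: "T = ennreal (a * ?P)"
      unfolding T_def a_def using False T_identity[OF w I0 r] by (simp add: I_def)
    have J: "?J \<le> ennreal (a * ?w)"
      unfolding a_def I_def by (rule holder[OF Q(1) f r False])
    have "ennreal (1 / ?m) * (\<integral>\<^sup>+y\<in>Q. ennreal (\<bar>b x - b y\<bar> * \<bar>f y\<bar>) \<partial>lebesgue) \<le> ennreal (1 / ?m) * (ennreal D * ennreal (a * ?w))"
      using LJ J by (intro mult_left_mono order_trans[OF LJ]) auto
    also have "\<dots> = ennreal (1 / ?m * (D * (a * ?w)))"
    proof -
      have a0: "0 \<le> a" unfolding a_def by simp
      have "ennreal D * ennreal (a * ?w) = ennreal (D * (a * ?w))"
        by (rule ennreal_mult[symmetric]) (use D a0 w in auto)
      moreover have "ennreal (1 / ?m) * ennreal (D * (a * ?w)) = ennreal (1 / ?m * (D * (a * ?w)))"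
        by (rule ennreal_mult[symmetric]) (use D a0 w m in auto)
      ultimately show ?thesis by simp
    qed
    also have "1 / ?m * (D * (a * ?w)) = C * L * \<mu> x * (a * ?P)"
      unfolding D_def C_def using m w by (simp add: field_simps)
    also have "ennreal (C * L * \<mu> x * (a * ?P)) = ennreal C * ennreal L * ennreal (\<mu> x) * T"
      unfolding T using C mx by (simp add: ennreal_mult a_def)
    also have "\<dots> \<le> ennreal C * ennreal L * ennreal (\<mu> x) * Mfrac \<beta> \<mu> r f x"
      using TM by (intro mult_left_mono) auto
    finally have "ennreal (1 / ?m) * (\<integral>\<^sup>+y\<in>Q. ennreal (\<bar>b x - b y\<bar> * \<bar>f y\<bar>) \<partial>lebesgue) \<le> ennreal C * ennreal L * ennreal (\<mu> x) * Mfrac \<beta> \<mu> r f x" .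
    then show ?thesis by (subst lipL) (simp add: C_def)
  qed
qed

end

theorem lemma2p7:
  fixes \<mu> b :: "'a::euclidean_space \<Rightarrow> real" and \<beta> r :: real
  assumes "weight \<mu>" and "A1 \<mu>"
    and "0 < \<beta>" and "\<beta> < 1"
    and "in_Lip \<beta> \<mu> b"
    and "1 < r"
  shows "\<exists>C>0. \<forall>f. locally_integrable f \<longrightarrow>
           (AE x in lebesgue. Mb b f x \<le> ennreal C * lip_norm \<beta> \<mu> b * ennreal (\<mu> x) * Mfrac \<beta> \<mu> r f x)"
proof -
  obtain C1 where C1: "C1 \<ge> 1" and GA: "AE x in lebesgue. 0 < \<mu> x \<and>
     (\<forall>Q\<in>cubes. x \<in> Q \<longrightarrow> wmeas \<mu> Q / measure lebesgue Q \<le> C1 * \<mu> x)"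
    using A1_uniform[OF assms(1,2)] by blast
  interpret S: setting \<mu> b \<beta> C1
    using assms C1 GA by unfold_locales auto
  show ?thesis
  proof (intro exI[of _ "2 * S.K0 * C1"] conjI allI impI)
    show "0 < 2 * S.K0 * C1" using S.K0_pos C1 by simp
    fix f :: "'a \<Rightarrow> real" assume f: "locally_integrable f"
    have fm: "f \<in> borel_measurable lebesgue" by (rule li_meas[OF f])
    show "AE x in lebesgue. Mb b f x \<le> ennreal (2 * S.K0 * C1) * lip_norm \<beta> \<mu> b * ennreal (\<mu> x) * Mfrac \<beta> \<mu> r f x"
      using S.AE_GB'
    proof eventually_elim
      case (elim x)
      show ?case unfolding Mb_def
        by (rule SUP_least) (auto intro!: S.main_cube[OF elim _ _ fm assms(6)])
    qed
  qed
qed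

end
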